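(* Define the pre-sum $A\boxplus B$ of two triangles $A=A_1A_2A_3$, $B=B_1B_2B_3$ in the real projective plane as follows. If $A$ and $B$ are perspective from a point $S$ (the lines $A_iB_i$ all pass through $S$), then $A\boxplus B=C_1C_2C_3$ where, for every permutation $(i,j,k)$ of $(1,2,3)$, $P_{ij}=A_iA_k\cap B_jB_k$ and $C_k=P_{ik}P_{ki}\cap P_{jk}P_{kj}$. If $A$ and $B$ are perspective from a line $s$ (the points $A_kA_j\cap B_kB_j$ all lie on $s$), then $A\boxplus B=C_1C_2C_3$ with $C_k=A_iB_j\cap A_jB_i$ for every permutation $(i,j,k)$. Then, whenever the constructions involved are well defined (general position): (1) $A\boxplus B=B\boxplus A$; (2) if $A\boxplus B=C$, then $A\boxplus C=B$ and $B\boxplus C=A$. *)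

theory Defs
  imports "HOL-Analysis.Analysis" "HOL-Analysis.Cross3"
begin

text \<open>Real projective plane in homogeneous coordinates: points and lines are
nonzero vectors of real^3 up to scaling; incidence is the dot product;
the join of two points and the meet of two lines are cross products
(a zero result signals that the construction is not defined).
A triangle is a matrix whose rows A$1, A$2, A$3 are its vertices.\<close>

definition proj_eq :: "real^3 \<Rightarrow> real^3 \<Rightarrow> bool" where
  "proj_eq p q \<longleftrightarrow> p \<noteq> 0 \<and> q \<noteq> 0 \<and> cross3 p q = 0"

definition join :: "real^3 \<Rightarrow> real^3 \<Rightarrow> real^3" where
  "join p q = cross3 p q"

definition meet :: "real^3 \<Rightarrow> real^3 \<Rightarrow> real^3" where
  "meet l m = cross3 l m"

definition incident :: "real^3 \<Rightarrow> real^3 \<Rightarrow> bool" where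
  "incident p l \<longleftrightarrow> inner p l = 0"

definition triangle :: "real^3^3 \<Rightarrow> bool" where
  "triangle A \<longleftrightarrow> det A \<noteq> 0"

definition tri_eq :: "real^3^3 \<Rightarrow> real^3^3 \<Rightarrow> bool" where
  "tri_eq C D \<longleftrightarrow> (\<forall>k. proj_eq (C$k) (D$k))"

definition persp_point :: "real^3^3 \<Rightarrow> real^3^3 \<Rightarrow> bool" where
  "persp_point A B \<longleftrightarrow> (\<exists>S. S \<noteq> 0 \<and>
     (\<forall>i. join (A$i) (B$i) \<noteq> 0 \<and> incident S (join (A$i) (B$i))))"

definition persp_line :: "real^3^3 \<Rightarrow> real^3^3 \<Rightarrow> bool" where
  "persp_line A B \<longleftrightarrow> (\<exists>s. s \<noteq> 0 \<and>
     (\<forall>j k. j \<noteq> k \<longrightarrow>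
        meet (join (A$k) (A$j)) (join (B$k) (B$j)) \<noteq> 0 \<and>
        incident (meet (join (A$k) (A$j)) (join (B$k) (B$j))) s))"

definition Ppt :: "real^3^3 \<Rightarrow> real^3^3 \<Rightarrow> 3 \<Rightarrow> 3 \<Rightarrow> 3 \<Rightarrow> real^3" where
  "Ppt A B i j k = meet (join (A$i) (A$k)) (join (B$j) (B$k))"

text \<open>Pre-sum, point-perspective case: C_k = P_ik P_ki \<inter> P_jk P_kj
  (with P_ik = Ppt A B i k j etc.), for every permutation (i,j,k);
  equality of C_k with the construction is projective equality, which
  also requires the construction to be well defined (nonzero).\<close>
definition presum_point :: "real^3^3 \<Rightarrow> real^3^3 \<Rightarrow> real^3^3 \<Rightarrow> bool" where
  "presum_point A B C \<longleftrightarrow> triangle A \<and> triangle B \<and> persp_point A B \<and>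
     (\<forall>i j k. i \<noteq> j \<and> j \<noteq> k \<and> i \<noteq> k \<longrightarrow>
        proj_eq (C$k)
          (meet (join (Ppt A B i k j) (Ppt A B k i j))
                (join (Ppt A B j k i) (Ppt A B k j i))))"

definition presum_line :: "real^3^3 \<Rightarrow> real^3^3 \<Rightarrow> real^3^3 \<Rightarrow> bool" where
  "presum_line A B C \<longleftrightarrow> triangle A \<and> triangle B \<and> persp_line A B \<and>
     (\<forall>i j k. i \<noteq> j \<and> j \<noteq> k \<and> i \<noteq> k \<longrightarrow>
        proj_eq (C$k) (meet (join (A$i) (B$j)) (join (A$j) (B$i))))"

end

theory Submission
  imports Defs
begin

lemma n3: "(1::3) \<noteq> 2" "(1::3) \<noteq> 3" "(2::3) \<noteq> 3" by simp_all
lemma ex3: "\<exists>i j. i \<noteq> j \<and> j \<noteq> k \<and> i \<noteq> (k::3)"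
proof -
  have "k = 1 \<or> k = 2 \<or> k = 3" by (rule exhaust_3)
  then show ?thesis using n3 by (metis)
qed

definition sm :: "real^3 \<Rightarrow> real^3 \<Rightarrow> bool" where
  "sm x y \<longleftrightarrow> (\<exists>c. x = c *\<^sub>R y)"

lemma triple: "cross3 l (cross3 p q) = (l \<bullet> q) *\<^sub>R p - (l \<bullet> p) *\<^sub>R q"
  using exhaust_3 by (force simp add: cross3_simps)

lemma par_sm: assumes "cross3 x y = 0" "y \<noteq> 0" shows "sm x y"
proof -
  have "collinear {0, y, x}" using assms(1) cross_eq_0[of y x] cross_skew[of x y] by simp
  then show ?thesis using assms(2) unfolding collinear_lemma sm_def by auto
qed

lemma sm_trans: "sm x y \<Longrightarrow> sm y z \<Longrightarrow> sm x z"
  unfolding sm_def by (metis scaleR_scaleR)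

lemma sm_nz: "sm x y \<Longrightarrow> x \<noteq> 0 \<Longrightarrow> y \<noteq> 0"
  unfolding sm_def by auto

lemma sm_sym: assumes "sm x y" "x \<noteq> 0" shows "sm y x"
proof -
  obtain c where c: "x = c *\<^sub>R y" using assms unfolding sm_def by auto
  then have "c \<noteq> 0" using assms by auto
  then have "y = (1/c) *\<^sub>R x" using c by simp
  then show ?thesis unfolding sm_def by blast
qed

lemma sm_neg: "sm x y \<Longrightarrow> sm x (- y)"
  unfolding sm_def by (metis scaleR_minus_left scaleR_minus_right minus_minus)

lemma sm_refl: "sm x x"
  unfolding sm_def by (metis scaleR_one)

lemma sm_cross: "sm x x' \<Longrightarrow> sm y y' \<Longrightarrow> sm (cross3 x y) (cross3 x' y')"
  unfolding sm_def by (metis cross_mult_left cross_mult_right scaleR_scaleR)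

lemma sm_orth: "sm x y \<Longrightarrow> y \<bullet> l = 0 \<Longrightarrow> x \<bullet> l = 0"
  unfolding sm_def by auto

lemma perp2: assumes "l \<bullet> p = 0" "l \<bullet> q = 0" "cross3 p q \<noteq> 0" shows "sm l (cross3 p q)"
  using par_sm[OF _ assms(3)] triple[of l p q] assms(1,2) by simp

lemma proj_eq_sm: "proj_eq p q \<longleftrightarrow> p \<noteq> 0 \<and> q \<noteq> 0 \<and> sm p q"
  unfolding proj_eq_def using par_sm sm_def cross_mult_left by fastforce

lemma orth_simps[simp]:
  "cross3 x y \<bullet> x = 0" "cross3 x y \<bullet> y = 0" "x \<bullet> cross3 x y = 0" "y \<bullet> cross3 x y = 0"
  using dot_cross_self inner_commute by metis+

lemma inner_cross_swap: "u \<bullet> cross3 y x = 0 \<longleftrightarrow> u \<bullet> cross3 x y = 0"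
  by (metis cross_skew inner_minus_right neg_equal_0_iff_equal)

lemma cross_nz: "cross3 x y \<noteq> 0 \<Longrightarrow> x \<noteq> 0" "cross3 x y \<noteq> 0 \<Longrightarrow> y \<noteq> 0"
  by auto

lemma pe_meet:
  assumes "proj_eq c (cross3 (cross3 p1 p2) (cross3 p3 p4))"
  shows "c \<bullet> cross3 p1 p2 = 0" "c \<bullet> cross3 p3 p4 = 0" "cross3 p1 p2 \<noteq> 0" "cross3 p3 p4 \<noteq> 0"
    "p1 \<noteq> 0" "p2 \<noteq> 0" "p3 \<noteq> 0" "p4 \<noteq> 0" "c \<noteq> 0"
    "sm c (cross3 (cross3 p1 p2) (cross3 p3 p4))"
  using assms unfolding proj_eq_sm by (auto intro: sm_orth)

lemma stepQ:
  assumes "c1 \<bullet> M = 0" "c2 \<bullet> M = 0" "M \<noteq> 0" "p \<bullet> a = 0" "p \<bullet> M = 0" "p \<noteq> 0"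
    "cross3 a (cross3 c1 c2) \<noteq> 0"
  shows "sm (cross3 a (cross3 c1 c2)) p"
proof -
  have n1: "cross3 c1 c2 \<noteq> 0" using assms(7) by auto
  have "sm M (cross3 c1 c2)" using perp2 assms n1 by (simp add: inner_commute)
  then have "sm (cross3 c1 c2) M" using sm_sym assms(3) by blast
  then have s1: "sm (cross3 a (cross3 c1 c2)) (cross3 a M)" using sm_cross sm_refl by blast
  then have n2: "cross3 a M \<noteq> 0" using sm_nz assms(7) by blast
  have "sm p (cross3 a M)" using perp2 assms n2 by blast
  then show ?thesis using s1 sm_sym sm_trans assms(6) by blast
qed

lemma final:
  assumes "sm D (cross3 (cross3 q1 q2) (cross3 q3 q4))" "D \<noteq> 0"
    "q1 \<bullet> la = 0" "q2 \<bullet> la = 0" "q3 \<bullet> lb = 0" "q4 \<bullet> lb = 0" "la \<noteq> 0" "lb \<noteq> 0"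
    "b \<bullet> la = 0" "b \<bullet> lb = 0" "b \<noteq> 0"
  shows "sm D b"
proof -
  have nX: "cross3 (cross3 q1 q2) (cross3 q3 q4) \<noteq> 0" using sm_nz assms(1,2) by blast
  then have n1: "cross3 q1 q2 \<noteq> 0" "cross3 q3 q4 \<noteq> 0" by auto
  have "sm la (cross3 q1 q2)" using perp2 n1(1) assms by (simp add: inner_commute)
  then have a1: "sm (cross3 q1 q2) la" using sm_sym assms(7) by blast
  have "sm lb (cross3 q3 q4)" using perp2 n1(2) assms by (simp add: inner_commute)
  then have a2: "sm (cross3 q3 q4) lb" using sm_sym assms(8) by blast
  have s: "sm (cross3 (cross3 q1 q2) (cross3 q3 q4)) (cross3 la lb)" using sm_cross a1 a2 by blast
  then have nl: "cross3 la lb \<noteq> 0" using sm_nz nX by blast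
  have "sm b (cross3 la lb)" using perp2 assms nl by blast
  then show ?thesis using s assms(1) sm_sym sm_trans assms(11) by blast
qed

lemma orth_simps2[simp]:
  "cross3 (cross3 a b) c \<bullet> cross3 b a = 0" "cross3 c (cross3 a b) \<bullet> cross3 b a = 0"
  by (metis cross_skew inner_minus_right neg_equal_0_iff_equal orth_simps)+

lemma part2:
  assumes hC: "presum_point A B C" and hD: "presum_point A C D" and d: "i \<noteq> j" "j \<noteq> k" "i \<noteq> k"
  shows "proj_eq (D$k) (B$k)"
proof -
  let ?P = "Ppt A B" and ?Q = "Ppt A C"
  have H: "\<And>x y z. x \<noteq> y \<Longrightarrow> y \<noteq> z \<Longrightarrow> x \<noteq> z \<Longrightarrow> proj_eq (C$z)
     (cross3 (cross3 (?P x z y) (?P z x y)) (cross3 (?P y z x) (?P z y x)))"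
    using hC unfolding presum_point_def meet_def join_def by blast
  have HD: "proj_eq (D$k)
     (cross3 (cross3 (?Q i k j) (?Q k i j)) (cross3 (?Q j k i) (?Q k j i)))"
    using hD d unfolding presum_point_def meet_def join_def by blast
  note Hk = pe_meet[OF H[of i j k]] and Hj = pe_meet[OF H[of i k j]] and Hi = pe_meet[OF H[of j k i]]
  have Pnz: "?P i k j \<noteq> 0" "?P k i j \<noteq> 0" "?P j k i \<noteq> 0" "?P k j i \<noteq> 0"
     "?P i j k \<noteq> 0" "?P j i k \<noteq> 0"
    using Hk Hj d by auto
  note HDk = pe_meet[OF HD]
  note Pd = Ppt_def meet_def join_def
  have q1: "sm (?Q i k j) (?P j k i)"
    unfolding Ppt_def[of A C] meet_def join_def
    apply (rule stepQ[where M = "cross3 (?P j k i) (?P k j i)"])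
    using Hk Hj HDk d by (auto simp: Pd inner_cross_swap)
  have q2: "sm (?Q k i j) (?P j i k)"
    unfolding Ppt_def[of A C] meet_def join_def
    apply (rule stepQ[where M = "cross3 (?P i j k) (?P j i k)"])
    using Hi Hj HDk d by (auto simp: Pd inner_cross_swap)
  have q3: "sm (?Q j k i) (?P i k j)"
    unfolding Ppt_def[of A C] meet_def join_def
    apply (rule stepQ[where M = "cross3 (?P i k j) (?P k i j)"])
    using Hi Hk HDk d by (auto simp: Pd inner_cross_swap)
  have q4: "sm (?Q k j i) (?P i j k)"
    unfolding Ppt_def[of A C] meet_def join_def
    apply (rule stepQ[where M = "cross3 (?P i j k) (?P j i k)"])
    using Hi Hj HDk d by (auto simp: Pd inner_cross_swap)
  have s: "sm (D$k) (cross3 (cross3 (?P j k i) (?P j i k)) (cross3 (?P i k j) (?P i j k)))"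
    using HDk(10) sm_cross[OF sm_cross[OF q1 q2] sm_cross[OF q3 q4]] sm_trans by blast
  have "sm (D$k) (B$k)"
    apply (rule final[where la = "cross3 (B$k) (B$i)" and lb = "cross3 (B$k) (B$j)", OF s HDk(9)])
    using Pnz unfolding Pd by (auto dest: cross_nz)
  then show ?thesis using HDk(9) sm_nz unfolding proj_eq_sm by blast
qed

lemma part3:
  assumes hC: "presum_point A B C" and hD: "presum_point B C D" and d: "i \<noteq> j" "j \<noteq> k" "i \<noteq> k"
  shows "proj_eq (D$k) (A$k)"
proof -
  let ?P = "Ppt A B" and ?Q = "Ppt B C"
  have H: "\<And>x y z. x \<noteq> y \<Longrightarrow> y \<noteq> z \<Longrightarrow> x \<noteq> z \<Longrightarrow> proj_eq (C$z)
     (cross3 (cross3 (?P x z y) (?P z x y)) (cross3 (?P y z x) (?P z y x)))"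
    using hC unfolding presum_point_def meet_def join_def by blast
  have HD: "proj_eq (D$k)
     (cross3 (cross3 (?Q i k j) (?Q k i j)) (cross3 (?Q j k i) (?Q k j i)))"
    using hD d unfolding presum_point_def meet_def join_def by blast
  note Hk = pe_meet[OF H[of i j k]] and Hj = pe_meet[OF H[of i k j]] and Hi = pe_meet[OF H[of j k i]]
  have Pnz: "?P i k j \<noteq> 0" "?P k i j \<noteq> 0" "?P j k i \<noteq> 0" "?P k j i \<noteq> 0"
     "?P i j k \<noteq> 0" "?P j i k \<noteq> 0"
    using Hk Hj d by auto
  note HDk = pe_meet[OF HD]
  note Pd = Ppt_def meet_def join_def
  have q1: "sm (?Q i k j) (?P k j i)"
    unfolding Ppt_def[of B C] meet_def join_def
    apply (rule stepQ[where M = "cross3 (?P j k i) (?P k j i)"])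
    using Hk Hj HDk d by (auto simp: Pd inner_cross_swap)
  have q2: "sm (?Q k i j) (?P i j k)"
    unfolding Ppt_def[of B C] meet_def join_def
    apply (rule stepQ[where M = "cross3 (?P i j k) (?P j i k)"])
    using Hi Hj HDk d by (auto simp: Pd inner_cross_swap)
  have q3: "sm (?Q j k i) (?P k i j)"
    unfolding Ppt_def[of B C] meet_def join_def
    apply (rule stepQ[where M = "cross3 (?P i k j) (?P k i j)"])
    using Hi Hk HDk d by (auto simp: Pd inner_cross_swap)
  have q4: "sm (?Q k j i) (?P j i k)"
    unfolding Ppt_def[of B C] meet_def join_def
    apply (rule stepQ[where M = "cross3 (?P i j k) (?P j i k)"])
    using Hi Hj HDk d by (auto simp: Pd inner_cross_swap)
  have s: "sm (D$k) (cross3 (cross3 (?P k j i) (?P i j k)) (cross3 (?P k i j) (?P j i k)))"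
    using HDk(10) sm_cross[OF sm_cross[OF q1 q2] sm_cross[OF q3 q4]] sm_trans by blast
  have "sm (D$k) (A$k)"
    apply (rule final[where la = "cross3 (A$k) (A$i)" and lb = "cross3 (A$k) (A$j)", OF s HDk(9)])
    using Pnz unfolding Pd by (auto dest: cross_nz)
  then show ?thesis using HDk(9) sm_nz unfolding proj_eq_sm by blast
qed


lemma part5:
  assumes hC: "presum_line A B C" and hD: "presum_line A C D" and d: "i \<noteq> j" "j \<noteq> k" "i \<noteq> k"
  shows "proj_eq (D$k) (B$k)"
proof -
  have H: "\<And>x y z. x \<noteq> y \<Longrightarrow> y \<noteq> z \<Longrightarrow> x \<noteq> z \<Longrightarrow>
     proj_eq (C$z) (cross3 (cross3 (A$x) (B$y)) (cross3 (A$y) (B$x)))"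
    using hC unfolding presum_line_def meet_def join_def by blast
  have HD: "proj_eq (D$k) (cross3 (cross3 (A$i) (C$j)) (cross3 (A$j) (C$i)))"
    using hD d unfolding presum_line_def meet_def join_def by blast
  note Hj = pe_meet[OF H[of i k j]] and Hi = pe_meet[OF H[of j k i]]
  note HDk = pe_meet[OF HD]
  have "sm (D$k) (B$k)"
    apply (rule final[where la = "cross3 (A$i) (B$k)" and lb = "cross3 (A$j) (B$k)", OF HDk(10) HDk(9)])
    using Hj Hi d by (auto simp: inner_commute)
  then show ?thesis using HDk(9) sm_nz unfolding proj_eq_sm by blast
qed

lemma part6:
  assumes hC: "presum_line A B C" and hD: "presum_line B C D" and d: "i \<noteq> j" "j \<noteq> k" "i \<noteq> k"
  shows "proj_eq (D$k) (A$k)"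
proof -
  have H: "\<And>x y z. x \<noteq> y \<Longrightarrow> y \<noteq> z \<Longrightarrow> x \<noteq> z \<Longrightarrow>
     proj_eq (C$z) (cross3 (cross3 (A$x) (B$y)) (cross3 (A$y) (B$x)))"
    using hC unfolding presum_line_def meet_def join_def by blast
  have HD: "proj_eq (D$k) (cross3 (cross3 (B$i) (C$j)) (cross3 (B$j) (C$i)))"
    using hD d unfolding presum_line_def meet_def join_def by blast
  note Hj = pe_meet[OF H[of i k j]] and Hi = pe_meet[OF H[of j k i]]
  note HDk = pe_meet[OF HD]
  have "sm (D$k) (A$k)"
    apply (rule final[where la = "cross3 (A$k) (B$i)" and lb = "cross3 (A$k) (B$j)", OF HDk(10) HDk(9)])
    using Hj Hi d by (auto simp: inner_commute)
  then show ?thesis using HDk(9) sm_nz unfolding proj_eq_sm by blast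
qed

lemma cross_swap2: "cross3 (cross3 b a) (cross3 d c) = cross3 (cross3 a b) (cross3 c d)"
  by (simp add: cross_skew[of b a] cross_skew[of d c])

lemma part1:
  assumes hC: "presum_point A B C" and hD: "presum_point B A D" and d: "i \<noteq> j" "j \<noteq> k" "i \<noteq> k"
  shows "proj_eq (C$k) (D$k)"
proof -
  have sw: "\<And>x y z. Ppt B A x y z = - Ppt A B y x z"
    unfolding Ppt_def meet_def join_def by (simp add: cross_skew[of "cross3 (B$_) (B$_)"])
  have eq: "meet (join (Ppt B A i k j) (Ppt B A k i j)) (join (Ppt B A j k i) (Ppt B A k j i))
     = meet (join (Ppt A B i k j) (Ppt A B k i j)) (join (Ppt A B j k i) (Ppt A B k j i))"
    unfolding meet_def join_def sw cross_minus_left cross_minus_right minus_minus cross_swap2 by (rule refl)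
  have 1: "proj_eq (C$k) (meet (join (Ppt A B i k j) (Ppt A B k i j)) (join (Ppt A B j k i) (Ppt A B k j i)))"
    using hC d unfolding presum_point_def by blast
  have 2: "proj_eq (D$k) (meet (join (Ppt B A i k j) (Ppt B A k i j)) (join (Ppt B A j k i) (Ppt B A k j i)))"
    using hD d unfolding presum_point_def by blast
  show ?thesis using 1 2 sm_sym sm_trans unfolding eq proj_eq_sm by blast
qed

lemma part4:
  assumes hC: "presum_line A B C" and hD: "presum_line B A D" and d: "i \<noteq> j" "j \<noteq> k" "i \<noteq> k"
  shows "proj_eq (C$k) (D$k)"
proof -
  have eq: "meet (join (B$i) (A$j)) (join (B$j) (A$i)) = - meet (join (A$i) (B$j)) (join (A$j) (B$i))"
    unfolding meet_def join_def cross_skew[of "B$i"] cross_skew[of "B$j"] cross_minus_left cross_minus_right minus_minus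
    by (rule cross_skew)
  have 1: "proj_eq (C$k) (meet (join (A$i) (B$j)) (join (A$j) (B$i)))"
    using hC d unfolding presum_line_def by blast
  have 2: "proj_eq (D$k) (meet (join (B$i) (A$j)) (join (B$j) (A$i)))"
    using hD d unfolding presum_line_def by blast
  have "sm (C$k) (D$k)"
    using 1 2 sm_sym sm_trans sm_neg unfolding eq proj_eq_sm by (metis minus_minus)
  then show ?thesis using 1 2 unfolding proj_eq_sm by blast
qed

theorem lemma1:
  shows "(\<forall>A B C D. presum_point A B C \<and> presum_point B A D \<longrightarrow> tri_eq C D)
       \<and> (\<forall>A B C D. presum_point A B C \<and> presum_point A C D \<longrightarrow> tri_eq D B)
       \<and> (\<forall>A B C D. presum_point A B C \<and> presum_point B C D \<longrightarrow> tri_eq D A)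
       \<and> (\<forall>A B C D. presum_line A B C \<and> presum_line B A D \<longrightarrow> tri_eq C D)
       \<and> (\<forall>A B C D. presum_line A B C \<and> presum_line A C D \<longrightarrow> tri_eq D B)
       \<and> (\<forall>A B C D. presum_line A B C \<and> presum_line B C D \<longrightarrow> tri_eq D A)"
  unfolding tri_eq_def
proof (intro conjI allI impI)
  fix A B C D :: "real^3^3" and k :: 3
  obtain i j where d: "i \<noteq> j" "j \<noteq> k" "i \<noteq> k" using ex3[of k] by blast
  show "proj_eq (C$k) (D$k)" if "presum_point A B C \<and> presum_point B A D"
    using part1 that d by blast
  show "proj_eq (D$k) (B$k)" if "presum_point A B C \<and> presum_point A C D"
    using part2 that d by blast
  show "proj_eq (D$k) (A$k)" if "presum_point A B C \<and> presum_point B C D"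
    using part3 that d by blast
  show "proj_eq (C$k) (D$k)" if "presum_line A B C \<and> presum_line B A D"
    using part4 that d by blast
  show "proj_eq (D$k) (B$k)" if "presum_line A B C \<and> presum_line A C D"
    using part5 that d by blast
  show "proj_eq (D$k) (A$k)" if "presum_line A B C \<and> presum_line B C D"
    using part6 that d by blast
qed

end
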